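(* Let $r\ge 1$ and let $M=(v_1,\dots,v_n)$ be a finite list (repetitions allowed) of nonzero vectors of $\mathbb{F}_2^r$ that generate $\mathbb{F}_2^r$, and suppose $M$ is generic, i.e. $\sum_{i=1}^n v_i\neq \mathbf{0}$ in $\mathbb{F}_2^r$. Then the number of cyclic factors in the invariant factor decomposition of the Sylow-$2$ subgroup of the sandpile group $K(G(\mathbb{F}_2^r,M))$ (equivalently, $\dim_{\mathbb{F}_2} K(G(\mathbb{F}_2^r,M))\otimes \mathbb{Z}/2\mathbb{Z}$) is $2^{r-1}-1$.
   Context: The Cayley graph $G=G(\mathbb{F}_2^r,M)$ has vertex set $\mathbb{F}_2^r$; its Laplacian $L(G)$ is the $2^r\times 2^r$ integer matrix indexed by $\mathbb{F}_2^r$ with $L(G)_{u,u}=n$ and $L(G)_{u,w}=-\#\{i: u+v_i=w\}$ for $u\neq w$. Since $M$ generates, $G$ is connected and $\operatorname{coker}(L(G):\mathbb{Z}^{2^r}\to\mathbb{Z}^{2^r})\cong \mathbb{Z}\oplus K(G)$ with $K(G)$ a finite abelian group, called the sandpile group of $G$. *)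

theory Defs
  imports "HOL-Algebra.Coset"
begin

text \<open>Vectors of F_2^r are represented as boolean lists of length r;
  addition is componentwise exclusive or.\<close>

definition f2vecs :: "nat \<Rightarrow> bool list set" where
  "f2vecs r = {v. length v = r}"

definition f2zero :: "nat \<Rightarrow> bool list" where
  "f2zero r = replicate r False"

definition f2add :: "bool list \<Rightarrow> bool list \<Rightarrow> bool list" where
  "f2add u w = map2 (\<lambda>a b. a \<noteq> b) u w"

definition f2sum :: "nat \<Rightarrow> bool list list \<Rightarrow> bool list" where
  "f2sum r xs = foldr f2add xs (f2zero r)"

definition f2generates :: "nat \<Rightarrow> bool list list \<Rightarrow> bool" where
  "f2generates r M \<longleftrightarrow>
     (\<forall>w \<in> f2vecs r. \<exists>S \<subseteq> {..<length M}. f2sum r (map (\<lambda>i. M ! i) (filter (\<lambda>i. i \<in> S) [0..<length M])) = w)"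

definition cayley_laplacian :: "bool list list \<Rightarrow> bool list \<Rightarrow> bool list \<Rightarrow> int" where
  "cayley_laplacian M u w =
     (if u = w then int (length M)
      else - int (card {i. i < length M \<and> f2add u (M ! i) = w}))"

text \<open>The free abelian group Z^V (V finite), as a multiplicative HOL-Algebra group.\<close>
definition free_ab :: "'a set \<Rightarrow> ('a \<Rightarrow> int) monoid" where
  "free_ab V = \<lparr>carrier = {f. \<forall>x. x \<notin> V \<longrightarrow> f x = 0},
                mult = (\<lambda>f g x. f x + g x), one = (\<lambda>_. 0)\<rparr>"

definition mat_image :: "'a set \<Rightarrow> ('a \<Rightarrow> 'a \<Rightarrow> int) \<Rightarrow> ('a \<Rightarrow> int) set" where
  "mat_image V L = {(\<lambda>u. if u \<in> V then (\<Sum>w\<in>V. L u w * c w) else 0) | c. c \<in> carrier (free_ab V)}"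

definition coker :: "'a set \<Rightarrow> ('a \<Rightarrow> 'a \<Rightarrow> int) \<Rightarrow> ('a \<Rightarrow> int) set monoid" where
  "coker V L = free_ab V Mod mat_image V L"

definition torsion_part :: "('b, 'c) monoid_scheme \<Rightarrow> ('b, 'c) monoid_scheme" where
  "torsion_part H = H\<lparr>carrier := {a \<in> carrier H. \<exists>k::nat. k > 0 \<and> a [^]\<^bsub>H\<^esub> k = \<one>\<^bsub>H\<^esub>}\<rparr>"

definition sandpile_group :: "nat \<Rightarrow> bool list list \<Rightarrow> (bool list \<Rightarrow> int) set monoid" where
  "sandpile_group r M = torsion_part (coker (f2vecs r) (cayley_laplacian M))"

text \<open>K \<otimes> Z/2Z, realised as K / 2K.\<close>
definition mod_two :: "('b, 'c) monoid_scheme \<Rightarrow> 'b set monoid" where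
  "mod_two H = H Mod {a \<otimes>\<^bsub>H\<^esub> a | a. a \<in> carrier H}"

end

theory Submission
  imports Defs
begin



lemma length_f2add[simp]: "length (f2add u w) = min (length u) (length w)"
  by (simp add: f2add_def)

lemma f2add_nth[simp]: "i < length u \<Longrightarrow> i < length w \<Longrightarrow> f2add u w ! i = (u ! i \<noteq> w ! i)"
  by (simp add: f2add_def)

lemma f2vecs_iff[simp]: "v \<in> f2vecs r \<longleftrightarrow> length v = r"
  by (simp add: f2vecs_def)

lemma length_f2zero[simp]: "length (f2zero r) = r"
  by (simp add: f2zero_def)

lemma f2zero_nth[simp]: "i < r \<Longrightarrow> f2zero r ! i = False"
  by (simp add: f2zero_def)

lemma f2add_comm: "f2add u w = f2add w u"
  by (rule nth_equalityI) auto

lemma f2add_assoc: "length u = r \<Longrightarrow> length w = r \<Longrightarrow> length z = r \<Longrightarrow>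
   f2add (f2add u w) z = f2add u (f2add w z)"
  by (rule nth_equalityI) auto

lemma f2add_swap: "length z = r \<Longrightarrow> length a = r \<Longrightarrow> length b = r \<Longrightarrow>
   f2add (f2add z a) b = f2add (f2add z b) a"
  by (rule nth_equalityI) auto

lemma f2add_zero: "length u = r \<Longrightarrow> f2add u (f2zero r) = u"
  by (rule nth_equalityI) auto

lemma f2add_self: "length u = r \<Longrightarrow> f2add u u = f2zero r"
  by (rule nth_equalityI) auto

lemma f2add_cancel: "length u = r \<Longrightarrow> length w = r \<Longrightarrow> f2add (f2add u w) w = u"
  by (rule nth_equalityI) auto

lemma f2add_eq_zero: "length u = r \<Longrightarrow> length w = r \<Longrightarrow> f2add u w = f2zero r \<longleftrightarrow> u = w"
proof
  assume "length u = r" "length w = r" "f2add u w = f2zero r"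
  then show "u = w"
  proof (intro nth_equalityI)
    fix i assume "i < length u"
    then have "f2add u w ! i = f2zero r ! i" using \<open>f2add u w = f2zero r\<close> by simp
    then show "u ! i = w ! i" using \<open>i < length u\<close> \<open>length u = r\<close> \<open>length w = r\<close> by auto
  qed simp
qed (auto simp: f2add_self)

lemma f2add_eq_self: "length u = r \<Longrightarrow> length w = r \<Longrightarrow> f2add u w = u \<longleftrightarrow> w = f2zero r"
proof
  assume a: "length u = r" "length w = r" "f2add u w = u"
  show "w = f2zero r"
  proof (rule nth_equalityI)
    fix i assume "i < length w"
    then have "(u ! i \<noteq> w ! i) = u ! i" using a f2add_nth[of i u w] by metis
    then show "w ! i = f2zero r ! i" using a \<open>i < length w\<close> by (cases "u ! i"; cases "w ! i") auto
  qed (use a in simp)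
qed (auto simp: f2add_zero)

lemma finite_f2vecs[simp]: "finite (f2vecs r)"
proof -
  have "f2vecs r = {xs. set xs \<subseteq> (UNIV::bool set) \<and> length xs = r}" by (auto simp: f2vecs_def)
  then show ?thesis using finite_lists_length_eq[of "UNIV::bool set" r] by simp
qed

lemma card_f2vecs: "card (f2vecs r) = 2 ^ r"
proof -
  have "f2vecs r = {xs. set xs \<subseteq> (UNIV::bool set) \<and> length xs = r}" by (auto simp: f2vecs_def)
  then show ?thesis using card_lists_length_eq[of "UNIV::bool set" r] by simp
qed

lemma bij_f2add: "length v = r \<Longrightarrow> bij_betw (\<lambda>u. f2add u v) (f2vecs r) (f2vecs r)"
  by (rule bij_betw_byWitness[where f'="\<lambda>u. f2add u v"]) (auto simp: f2add_cancel)

lemma sum_f2add_shift: "length v = r \<Longrightarrow> (\<Sum>u\<in>f2vecs r. g (f2add u v)) = (\<Sum>u\<in>f2vecs r. g u)"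
  using sum.reindex_bij_betw[OF bij_f2add, of v r g] by simp

lemma even_sum_int: "finite I \<Longrightarrow> (\<And>i. i \<in> I \<Longrightarrow> even (f i :: int)) \<Longrightarrow> even (sum f I)"
  by (simp add: dvd_sum)

lemma sym_sum_parity:
  fixes f :: "'a \<Rightarrow> 'a \<Rightarrow> int"
  assumes "finite J" "\<And>i k. f i k = f k i"
  shows "even ((\<Sum>i\<in>J. \<Sum>k\<in>J. f i k) - (\<Sum>i\<in>J. f i i))"
  using assms(1)
proof (induction J rule: finite_induct)
  case (insert a J)
  have e1: "(\<Sum>i\<in>insert a J. \<Sum>k\<in>insert a J. f i k)
     = f a a + (\<Sum>k\<in>J. f a k) + (\<Sum>i\<in>J. f i a) + (\<Sum>i\<in>J. \<Sum>k\<in>J. f i k)"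
    using insert by (simp add: sum.distrib)
  have e2: "(\<Sum>i\<in>J. f i a) = (\<Sum>k\<in>J. f a k)"
    by (rule sum.cong) (rule refl, rule assms(2))
  have e3: "(\<Sum>i\<in>insert a J. f i i) = f a a + (\<Sum>i\<in>J. f i i)"
    using insert by simp
  have "(\<Sum>i\<in>insert a J. \<Sum>k\<in>insert a J. f i k) - (\<Sum>i\<in>insert a J. f i i)
      = ((\<Sum>i\<in>J. \<Sum>k\<in>J. f i k) - (\<Sum>i\<in>J. f i i)) + 2 * (\<Sum>k\<in>J. f a k)"
    unfolding e1 e2 e3 by simp
  then show ?case using insert by simp
qed simp

lemma of_bool_xor: "even ((of_bool (P \<noteq> Q) :: int) - of_bool P - of_bool Q)"
  by (cases P; cases Q) auto

lemma (in comm_group) torsion_subgroup: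
  "subgroup {a \<in> carrier G. \<exists>k::nat. k > 0 \<and> a [^] k = \<one>} G"
proof (rule subgroupI)
  show "{a \<in> carrier G. \<exists>k::nat. k > 0 \<and> a [^] k = \<one>} \<noteq> {}"
  proof -
    have "\<one> \<in> {a \<in> carrier G. \<exists>k::nat. k > 0 \<and> a [^] k = \<one>}" by (auto intro: exI[of _ "1::nat"])
    then show ?thesis by blast
  qed
next
  fix a assume "a \<in> {a \<in> carrier G. \<exists>k::nat. k > 0 \<and> a [^] k = \<one>}"
  then obtain k::nat where "a \<in> carrier G" "k > 0" "a [^] k = \<one>" by auto
  then show "inv a \<in> {a \<in> carrier G. \<exists>k::nat. k > 0 \<and> a [^] k = \<one>}"
    by (auto simp: nat_pow_inv intro!: exI[of _ k])
next
  fix a b assume "a \<in> {a \<in> carrier G. \<exists>k::nat. k > 0 \<and> a [^] k = \<one>}"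
    "b \<in> {a \<in> carrier G. \<exists>k::nat. k > 0 \<and> a [^] k = \<one>}"
  then obtain k m::nat where "a \<in> carrier G" "k > 0" "a [^] k = \<one>"
    "b \<in> carrier G" "m > 0" "b [^] m = \<one>" by auto
  then have "(a \<otimes> b) [^] (k * m) = \<one>"
  proof -
    have "a [^] (k * m) = \<one>" by (metis \<open>a [^] k = \<one>\<close> \<open>a \<in> carrier G\<close> nat_pow_pow nat_pow_one)
    moreover have "b [^] (k * m) = \<one>" by (metis \<open>b [^] m = \<one>\<close> \<open>b \<in> carrier G\<close> nat_pow_pow nat_pow_one mult.commute)
    ultimately show ?thesis using \<open>a \<in> carrier G\<close> \<open>b \<in> carrier G\<close> by (simp add: nat_pow_distrib)
  qed
  then show "a \<otimes> b \<in> {a \<in> carrier G. \<exists>k::nat. k > 0 \<and> a [^] k = \<one>}"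
    using \<open>k > 0\<close> \<open>m > 0\<close> \<open>a \<in> carrier G\<close> \<open>b \<in> carrier G\<close>
    by (auto intro!: exI[of _ "k*m"])
qed auto




declare sum_of_bool_eq[simp del]

lemma parity3: "even ((x::int) - y - z) \<Longrightarrow> odd x \<longleftrightarrow> (odd y \<noteq> odd z)"
  by (metis diff_diff_eq even_add even_diff)

definition dot :: "bool list \<Rightarrow> bool list \<Rightarrow> bool" where
  "dot s u = odd (\<Sum>k<length s. (of_bool (s ! k \<and> u ! k) :: int))"

definition chi :: "bool list \<Rightarrow> bool list \<Rightarrow> int" where
  "chi s u = (if dot s u then -1 else 1)"

lemma dot_add:
  assumes "length s = r" "length u = r" "length w = r"
  shows "dot s (f2add u w) = (dot s u \<noteq> dot s w)"
proof -
  have "even ((\<Sum>k<r. (of_bool (s ! k \<and> f2add u w ! k) :: int))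
     - (\<Sum>k<r. (of_bool (s ! k \<and> u ! k) :: int)) - (\<Sum>k<r. (of_bool (s ! k \<and> w ! k) :: int)))"
    unfolding sum_subtractf[symmetric]
    by (rule even_sum_int) (use assms in \<open>auto simp: of_bool_def\<close>)
  then have "odd (\<Sum>k<r. (of_bool (s ! k \<and> f2add u w ! k) :: int)) \<longleftrightarrow>
     (odd (\<Sum>k<r. (of_bool (s ! k \<and> u ! k) :: int)) \<noteq> odd (\<Sum>k<r. (of_bool (s ! k \<and> w ! k) :: int)))"
    by (rule parity3)
  then show ?thesis unfolding dot_def using assms by simp
qed

lemma dot_comm: "length s = length u \<Longrightarrow> dot s u = dot u s"
  unfolding dot_def by (simp add: conj_commute)

lemma dot_zero: "dot s (f2zero (length s)) = False"
  unfolding dot_def by simp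

lemma dot_zero2: "length s = r \<Longrightarrow> dot s (f2zero r) = False"
  using dot_zero by blast

lemma dot_zero1: "dot (f2zero r) u = False"
  unfolding dot_def by simp

lemma chi_add: "length s = r \<Longrightarrow> length u = r \<Longrightarrow> length w = r \<Longrightarrow>
   chi s (f2add u w) = chi s u * chi s w"
  by (simp add: chi_def dot_add)

lemma chi_add1: "length s = r \<Longrightarrow> length t = r \<Longrightarrow> length u = r \<Longrightarrow>
   chi (f2add s t) u = chi s u * chi t u"
  using chi_add[of u r s t] by (simp add: chi_def dot_comm)

lemma chi_zero1: "chi (f2zero r) u = 1"
  by (simp add: chi_def dot_zero1)

lemma chi_sq: "chi s u * chi s u = 1"
  by (simp add: chi_def)

definition unitv :: "nat \<Rightarrow> nat \<Rightarrow> bool list" where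
  "unitv r j = (f2zero r)[j := True]"

lemma length_unitv[simp]: "length (unitv r j) = r"
  by (simp add: unitv_def)

lemma dot_unitv: "j < r \<Longrightarrow> length u = r \<Longrightarrow> dot (unitv r j) u = u ! j"
proof -
  assume a: "j < r" "length u = r"
  have "(\<Sum>k<r. (of_bool (unitv r j ! k \<and> u ! k) :: int)) = (\<Sum>k<r. if k = j then of_bool (u ! j) else 0)"
    by (rule sum.cong) (use a in \<open>auto simp: unitv_def nth_list_update\<close>)
  also have "\<dots> = of_bool (u ! j)" using a by simp
  finally show ?thesis unfolding dot_def by simp
qed

lemma nonzero_has_one: "length u = r \<Longrightarrow> u \<noteq> f2zero r \<Longrightarrow> \<exists>j<r. u ! j"
proof (rule ccontr)
  assume a: "length u = r" "u \<noteq> f2zero r" "\<not> (\<exists>j<r. u ! j)"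
  have "u = f2zero r" by (rule nth_equalityI) (use a in auto)
  then show False using a by simp
qed

lemma sum_chi:
  assumes "length u = r"
  shows "(\<Sum>s\<in>f2vecs r. chi s u) = (if u = f2zero r then 2 ^ r else 0)"
proof (cases "u = f2zero r")
  case True
  have "(\<Sum>s\<in>f2vecs r. chi s u) = (\<Sum>s\<in>f2vecs r. 1)"
    by (rule sum.cong) (use True in \<open>auto simp: chi_def dot_zero2\<close>)
  then show ?thesis using True by (simp add: card_f2vecs)
next
  case False
  then obtain j where j: "j < r" "u ! j" using nonzero_has_one assms by blast
  have "(\<Sum>s\<in>f2vecs r. chi s u) = (\<Sum>s\<in>f2vecs r. chi (f2add s (unitv r j)) u)"
    by (rule sum_f2add_shift[symmetric]) simp
  also have "\<dots> = (\<Sum>s\<in>f2vecs r. chi s u * chi (unitv r j) u)"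
    by (rule sum.cong) (use assms in \<open>auto simp: chi_add1\<close>)
  also have "\<dots> = - (\<Sum>s\<in>f2vecs r. chi s u)"
    using j assms by (simp add: chi_def dot_unitv sum_negf)
  finally show ?thesis using False by simp
qed

lemma chi_expansion:
  assumes "length u = r"
  shows "(\<Sum>s\<in>f2vecs r. (\<Sum>w\<in>f2vecs r. chi s w * x w) * chi s u) = 2 ^ r * x u"
proof -
  have "(\<Sum>s\<in>f2vecs r. (\<Sum>w\<in>f2vecs r. chi s w * x w) * chi s u)
      = (\<Sum>s\<in>f2vecs r. \<Sum>w\<in>f2vecs r. x w * chi s (f2add w u))"
    by (rule sum.cong) (use assms in \<open>auto simp: sum_distrib_right chi_add intro!: sum.cong\<close>)
  also have "\<dots> = (\<Sum>w\<in>f2vecs r. x w * (\<Sum>s\<in>f2vecs r. chi s (f2add w u)))"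
    by (subst sum.swap) (simp add: sum_distrib_left)
  also have "\<dots> = (\<Sum>w\<in>f2vecs r. if w = u then 2 ^ r * x u else 0)"
    by (rule sum.cong) (use assms in \<open>auto simp: sum_chi f2add_eq_zero\<close>)
  also have "\<dots> = 2 ^ r * x u" using assms by simp
  finally show ?thesis .
qed

lemma dot_f2sum:
  assumes "length s = r" "\<forall>x\<in>set xs. length x = r \<and> \<not> dot s x"
  shows "\<not> dot s (f2sum r xs)" "length (f2sum r xs) = r"
  using assms(2)
proof (induction xs)
  case Nil
  { case 1 then show ?case using assms(1) by (simp add: f2sum_def dot_zero[of s, simplified assms(1)]) }
  { case 2 then show ?case by (simp add: f2sum_def) }
next
  case (Cons a xs)
  { case 1 then show ?case using Cons.IH assms(1)
      by (simp add: f2sum_def dot_add) }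
  { case 2 then show ?case using Cons.IH by (simp add: f2sum_def) }
qed

lemma f2sum_nth:
  assumes "\<forall>x\<in>set xs. length x = r" "j < r"
  shows "f2sum r xs ! j = odd (\<Sum>i<length xs. (of_bool (xs ! i ! j) :: int))"
    "length (f2sum r xs) = r"
  using assms(1)
proof (induction xs)
  case Nil
  { case 1 then show ?case using assms(2) by (simp add: f2sum_def) }
  { case 2 then show ?case by (simp add: f2sum_def) }
next
  case (Cons a xs)
  { case 1
    have e: "(\<Sum>i<length (a # xs). (of_bool ((a # xs) ! i ! j) :: int))
        = of_bool (a ! j) + (\<Sum>i<length xs. (of_bool (xs ! i ! j) :: int))"
      unfolding length_Cons sum.lessThan_Suc_shift by simp
    show ?case using Cons.IH 1 assms(2) unfolding e
      by (simp add: f2sum_def) }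
  { case 2 then show ?case using Cons.IH by (simp add: f2sum_def) }
qed




lemma carrier_free_ab: "carrier (free_ab V) = {f. \<forall>x. x \<notin> V \<longrightarrow> f x = 0}"
  by (simp add: free_ab_def)

locale sp =
  fixes r :: nat and M :: "bool list list"
  assumes r1: "r \<ge> 1"
    and Mv: "\<forall>v \<in> set M. v \<in> f2vecs r \<and> v \<noteq> f2zero r"
    and gen: "f2generates r M"
    and generic: "f2sum r M \<noteq> f2zero r"
begin

abbreviation "V \<equiv> f2vecs r"
abbreviation "n \<equiv> length M"

lemma Mi: "i < n \<Longrightarrow> length (M ! i) = r" "i < n \<Longrightarrow> M ! i \<noteq> f2zero r"
  using Mv nth_mem by auto

definition Lop :: "(bool list \<Rightarrow> int) \<Rightarrow> bool list \<Rightarrow> int" where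
  "Lop c = (\<lambda>u. if u \<in> V then (\<Sum>i<n. c u - c (f2add u (M ! i))) else 0)"

lemma card_times: "(\<Sum>i<n. if P i then (x::int) else 0) = int (card {i. i < n \<and> P i}) * x"
proof -
  have "(\<Sum>i<n. if P i then (x::int) else 0) = (\<Sum>i\<in>{i. i < n \<and> P i}. x)"
    by (rule sum.mono_neutral_cong_right) auto
  then show ?thesis by simp
qed

lemma L_formula:
  assumes u: "u \<in> V"
  shows "(\<Sum>w\<in>V. cayley_laplacian M u w * c w) = (\<Sum>i<n. c u - c (f2add u (M ! i)))"
proof -
  have inV: "i < n \<Longrightarrow> f2add u (M ! i) \<in> V - {u}" for i
    using u Mi[of i] by (auto simp: f2add_eq_self)
  have "(\<Sum>w\<in>V. cayley_laplacian M u w * c w)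
      = cayley_laplacian M u u * c u + (\<Sum>w\<in>V - {u}. cayley_laplacian M u w * c w)"
    using u by (simp add: sum.remove)
  also have "(\<Sum>w\<in>V - {u}. cayley_laplacian M u w * c w)
      = - (\<Sum>w\<in>V - {u}. \<Sum>i<n. if f2add u (M ! i) = w then c w else 0)"
  proof -
    have "\<And>w. w \<in> V - {u} \<Longrightarrow> cayley_laplacian M u w * c w = - (\<Sum>i<n. if f2add u (M ! i) = w then c w else 0)"
      by (auto simp: cayley_laplacian_def card_times)
    then show ?thesis by (simp add: sum_negf)
  qed
  also have "(\<Sum>w\<in>V - {u}. \<Sum>i<n. if f2add u (M ! i) = w then c w else 0)
      = (\<Sum>i<n. \<Sum>w\<in>V - {u}. if f2add u (M ! i) = w then c w else 0)"
    by (rule sum.swap)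
  also have "\<dots> = (\<Sum>i<n. c (f2add u (M ! i)))"
    by (rule sum.cong) (use inV in auto)
  finally show ?thesis
    by (simp add: cayley_laplacian_def sum_subtractf)
qed

lemma mat_image_eq: "mat_image V (cayley_laplacian M) = Lop ` carrier (free_ab V)"
  unfolding mat_image_def Lop_def by (auto simp: L_formula cong: if_cong)

lemma Lop_deg: "(\<Sum>u\<in>V. Lop c u) = 0"
proof -
  have "(\<Sum>u\<in>V. Lop c u) = (\<Sum>u\<in>V. \<Sum>i<n. c u - c (f2add u (M ! i)))"
    by (simp add: Lop_def)
  also have "\<dots> = (\<Sum>i<n. (\<Sum>u\<in>V. c u) - (\<Sum>u\<in>V. c (f2add u (M ! i))))"
    by (subst sum.swap) (simp add: sum_subtractf)
  also have "\<dots> = 0"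
    by (rule sum.neutral) (auto simp: sum_f2add_shift Mi)
  finally show ?thesis .
qed

definition lam :: "bool list \<Rightarrow> int" where
  "lam s = (\<Sum>i<n. 1 - chi s (M ! i))"

lemma Lop_chi_comb:
  assumes "S \<subseteq> V" "u \<in> V"
  shows "Lop (\<lambda>w. if w \<in> V then \<Sum>s\<in>S. a s * chi s w else 0) u = (\<Sum>s\<in>S. a s * lam s * chi s u)"
proof -
  have fin: "finite S" using assms(1) finite_f2vecs by (rule finite_subset)
  have inV: "i < n \<Longrightarrow> f2add u (M ! i) \<in> V" for i using assms Mi by auto
  have "Lop (\<lambda>w. if w \<in> V then \<Sum>s\<in>S. a s * chi s w else 0) u
      = (\<Sum>i<n. (\<Sum>s\<in>S. a s * chi s u) - (\<Sum>s\<in>S. a s * chi s (f2add u (M ! i))))"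
    using assms inV by (simp add: Lop_def)
  also have "\<dots> = (\<Sum>i<n. \<Sum>s\<in>S. a s * chi s u * (1 - chi s (M ! i)))"
  proof (rule sum.cong)
    fix i assume "i \<in> {..<n}"
    then have "\<And>s. s \<in> S \<Longrightarrow> chi s (f2add u (M ! i)) = chi s u * chi s (M ! i)"
      using assms Mi by (auto intro!: chi_add)
    then show "(\<Sum>s\<in>S. a s * chi s u) - (\<Sum>s\<in>S. a s * chi s (f2add u (M ! i)))
        = (\<Sum>s\<in>S. a s * chi s u * (1 - chi s (M ! i)))"
      by (simp add: sum_subtractf[symmetric] algebra_simps)
  qed simp
  also have "\<dots> = (\<Sum>s\<in>S. a s * lam s * chi s u)"
    by (subst sum.swap) (simp add: lam_def sum_distrib_left sum_distrib_right algebra_simps)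
  finally show ?thesis .
qed

lemma lam_nonneg_terms: "0 \<le> 1 - chi s w" "1 - chi s w \<le> 2"
  by (auto simp: chi_def)

lemma lam_le: "lam s \<le> 2 * int n"
proof -
  have "lam s \<le> (\<Sum>i<n. 2)" unfolding lam_def by (rule sum_mono) (simp add: lam_nonneg_terms)
  then show ?thesis by simp
qed

lemma some_dot:
  assumes "s \<in> V" "s \<noteq> f2zero r"
  shows "\<exists>i<n. dot s (M ! i)"
proof (rule ccontr)
  assume no: "\<not> (\<exists>i<n. dot s (M ! i))"
  obtain j where j: "j < r" "s ! j" using nonzero_has_one assms by auto
  have "unitv r j \<in> V" by simp
  then obtain S where S: "f2sum r (map (\<lambda>i. M ! i) (filter (\<lambda>i. i \<in> S) [0..<n])) = unitv r j"
    using gen unfolding f2generates_def by blast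
  have "\<not> dot s (f2sum r (map (\<lambda>i. M ! i) (filter (\<lambda>i. i \<in> S) [0..<n])))"
    by (rule dot_f2sum(1)) (use no Mi assms in auto)
  then have "\<not> dot s (unitv r j)" using S by simp
  moreover have "dot s (unitv r j)" using dot_comm[of s "unitv r j"] dot_unitv[of j r s] j assms by simp
  ultimately show False by simp
qed

lemma lam_pos:
  assumes "s \<in> V" "s \<noteq> f2zero r"
  shows "lam s > 0"
proof -
  obtain i where i: "i < n" "dot s (M ! i)" using some_dot assms by blast
  have "lam s = (1 - chi s (M ! i)) + (\<Sum>k\<in>{..<n} - {i}. 1 - chi s (M ! k))"
    unfolding lam_def using i by (simp add: sum.remove)
  moreover have "(\<Sum>k\<in>{..<n} - {i}. 1 - chi s (M ! k)) \<ge> 0"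
    by (rule sum_nonneg) (rule lam_nonneg_terms(1))
  ultimately show ?thesis using i by (simp add: chi_def)
qed

lemma lam_dvd:
  assumes "s \<in> V" "s \<noteq> f2zero r"
  shows "lam s dvd int (fact (2 * n))"
proof -
  have p: "lam s > 0" "lam s \<le> 2 * int n" using lam_pos[OF assms] lam_le by auto
  define k where "k = nat (lam s)"
  have "k dvd fact (2 * n)" using p unfolding k_def by (intro dvd_fact) auto
  then have "int k dvd int (fact (2 * n))" by (simp only: int_dvd_int_iff)
  then show ?thesis using p unfolding k_def by simp
qed

lemma torsion:
  assumes x: "x \<in> carrier (free_ab V)" and deg: "(\<Sum>u\<in>V. x u) = 0"
  shows "(\<lambda>z. int (2 ^ r * fact (2 * n)) * x z) \<in> Lop ` carrier (free_ab V)"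
proof -
  define P where "P = int (fact (2 * n))"
  define c where "c s = (\<Sum>w\<in>V. chi s w * x w)" for s
  define S where "S = V - {f2zero r}"
  define y where "y = (\<lambda>w. if w \<in> V then \<Sum>s\<in>S. (c s * (P div lam s)) * chi s w else 0)"
  have c0: "c (f2zero r) = 0" using deg by (simp add: c_def chi_zero1)
  have y: "y \<in> carrier (free_ab V)" by (simp add: carrier_free_ab y_def)
  have "Lop y = (\<lambda>z. int (2 ^ r * fact (2 * n)) * x z)"
  proof
    fix u show "Lop y u = int (2 ^ r * fact (2 * n)) * x u"
    proof (cases "u \<in> V")
      case False
      then show ?thesis using x by (simp add: Lop_def carrier_free_ab)
    next
      case True
      have "Lop y u = (\<Sum>s\<in>S. c s * (P div lam s) * lam s * chi s u)"
        unfolding y_def by (rule Lop_chi_comb) (use True in \<open>auto simp: S_def\<close>)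
      also have "\<dots> = (\<Sum>s\<in>S. P * (c s * chi s u))"
      proof (rule sum.cong)
        fix s assume "s \<in> S"
        then have "lam s dvd P" unfolding P_def S_def by (intro lam_dvd) auto
        then have "P div lam s * lam s = P" by simp
        then show "c s * (P div lam s) * lam s * chi s u = P * (c s * chi s u)"
          by (metis mult.assoc mult.commute)
      qed simp
      also have "\<dots> = P * (\<Sum>s\<in>V. c s * chi s u)"
        using c0 by (simp add: S_def sum_distrib_left sum.remove[of V "f2zero r"])
      also have "\<dots> = P * (2 ^ r * x u)"
        using chi_expansion[of u r x] True by (simp add: c_def)
      finally show ?thesis by (simp add: P_def)
    qed
  qed
  then show ?thesis using y by (metis image_eqI)
qed

end



definition symd :: "'a set \<Rightarrow> 'a set \<Rightarrow> 'a set" where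
  "symd A B = (A - B) \<union> (B - A)"

lemma symd_iff[simp]: "x \<in> symd A B \<longleftrightarrow> (x \<in> A) \<noteq> (x \<in> B)"
  by (auto simp: symd_def)

lemma symd_self[simp]: "symd A A = {}"
  by (auto simp: symd_def)

lemma odd_of_bool_int: "even ((of_bool (odd (x::int)) :: int) - x)"
  by (cases "odd x") auto

lemma even_add2: "even ((a::int) - x) \<Longrightarrow> even (b - y) \<Longrightarrow> even ((a + b) - (x + y))"
proof -
  assume "even (a - x)" "even (b - y)"
  moreover have "(a + b) - (x + y) = (a - x) + (b - y)" by simp
  ultimately show ?thesis by simp
qed

lemma even_add3: "even ((a::int) - x - x') \<Longrightarrow> even (b - y - y') \<Longrightarrow> even ((a + b) - (x + y) - (x' + y'))"
proof -
  assume "even (a - x - x')" "even (b - y - y')"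
  moreover have "(a + b) - (x + y) - (x' + y') = (a - x - x') + (b - y - y')" by simp
  ultimately show ?thesis by (metis even_add)
qed

context sp
begin

definition abar :: "bool list set \<Rightarrow> bool list set" where
  "abar S = {u \<in> V. odd (\<Sum>i<n. (of_bool (u \<in> S) + of_bool (f2add u (M ! i) \<in> S) :: int))}"

lemma abar_sub: "abar S \<subseteq> V"
  by (auto simp: abar_def)

lemma abar_add: "abar (symd S S') = symd (abar S) (abar S')"
proof (rule Set.set_eqI)
  fix u
  have "even ((\<Sum>i<n. (of_bool (u \<in> symd S S') + of_bool (f2add u (M ! i) \<in> symd S S') :: int))
     - (\<Sum>i<n. (of_bool (u \<in> S) + of_bool (f2add u (M ! i) \<in> S) :: int))
     - (\<Sum>i<n. (of_bool (u \<in> S') + of_bool (f2add u (M ! i) \<in> S') :: int)))"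
    unfolding sum_subtractf[symmetric]
  proof (rule even_sum_int)
    fix i
    have "even ((of_bool (u \<in> symd S S') :: int) - of_bool (u \<in> S) - of_bool (u \<in> S'))"
      "even ((of_bool (f2add u (M ! i) \<in> symd S S') :: int) - of_bool (f2add u (M ! i) \<in> S) - of_bool (f2add u (M ! i) \<in> S'))"
      using of_bool_xor by auto
    then show "even ((of_bool (u \<in> symd S S') + of_bool (f2add u (M ! i) \<in> symd S S') :: int)
      - (of_bool (u \<in> S) + of_bool (f2add u (M ! i) \<in> S)) -
      (of_bool (u \<in> S') + of_bool (f2add u (M ! i) \<in> S')))"
      by (rule even_add3)
  qed simp
  then show "u \<in> abar (symd S S') \<longleftrightarrow> u \<in> symd (abar S) (abar S')"
    unfolding abar_def using parity3 by auto
qed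

lemma jex: "\<exists>j<r. f2sum r M ! j"
proof -
  have "length (f2sum r M) = r" using f2sum_nth(2)[of M r 0] Mv r1 by auto
  then show ?thesis using nonzero_has_one generic by blast
qed

definition jj where "jj = (SOME j. j < r \<and> f2sum r M ! j)"

lemma jj: "jj < r" "f2sum r M ! jj"
  using someI_ex[OF jex] unfolding jj_def by auto

definition H where "H = {u \<in> V. \<not> u ! jj}"
definition H' where "H' = {u \<in> V. u ! jj}"

lemma J_odd: "odd (card {i. i < n \<and> M ! i ! jj})"
proof -
  have "odd (\<Sum>i<n. (of_bool (M ! i ! jj) :: int))"
    using f2sum_nth(1)[of M r jj] jj Mv by auto
  moreover have "(\<Sum>i<n. (of_bool (M ! i ! jj) :: int)) = int (card {i. i < n \<and> M ! i ! jj})"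
    by (subst sum_of_bool_eq) (auto intro!: arg_cong[where f=card])
  ultimately show ?thesis by simp
qed

lemma abar_kernel:
  assumes "S \<subseteq> H" "abar S = {}"
  shows "S = {}"
proof (rule ccontr)
  assume "S \<noteq> {}"
  then obtain z where z: "z \<in> S" by auto
  then have zV: "length z = r" "\<not> z ! jj" using assms(1) by (auto simp: H_def)
  define J where "J = {i. i < n \<and> M ! i ! jj}"
  define f where "f i k = (of_bool (f2add (f2add z (M ! i)) (M ! k) \<in> S) :: int)" for i k
  have fsym: "f i k = f k i" if "i \<in> J" "k \<in> J" for i k
  proof -
    have "f2add (f2add z (M ! i)) (M ! k) = f2add (f2add z (M ! k)) (M ! i)"
      using that zV Mi unfolding J_def by (intro f2add_swap) auto
    then show ?thesis by (simp add: f_def)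
  qed
  have inner: "even (\<Sum>k\<in>J. f i k)" if i: "i \<in> J" for i
  proof -
    define u where "u = f2add z (M ! i)"
    have uV: "u \<in> V" "u ! jj" using i zV Mi jj unfolding u_def J_def by auto
    then have "u \<notin> S" using assms(1) by (auto simp: H_def)
    moreover have "u \<notin> abar S" using assms(2) by simp
    ultimately have "even (\<Sum>k<n. (of_bool (f2add u (M ! k) \<in> S) :: int))"
      using uV unfolding abar_def by simp
    moreover have "(\<Sum>k<n. (of_bool (f2add u (M ! k) \<in> S) :: int)) = (\<Sum>k\<in>J. f i k)"
    proof (rule sum.mono_neutral_cong_right)
      show "\<forall>k\<in>{..<n} - J. (of_bool (f2add u (M ! k) \<in> S) :: int) = 0"
      proof
        fix k assume k: "k \<in> {..<n} - J"
        then have "f2add u (M ! k) ! jj" using uV Mi[of k] jj(1) by (simp add: J_def)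
        then have "f2add u (M ! k) \<notin> S" using assms(1) by (auto simp: H_def)
        then show "(of_bool (f2add u (M ! k) \<in> S) :: int) = 0" by simp
      qed
    qed (auto simp: J_def f_def u_def)
    ultimately show ?thesis by simp
  qed
  have "even (\<Sum>i\<in>J. \<Sum>k\<in>J. f i k)" using inner by (simp add: dvd_sum)
  moreover have "even ((\<Sum>i\<in>J. \<Sum>k\<in>J. f i k) - (\<Sum>i\<in>J. f i i))"
  proof -
    define g where "g i k = (if i \<in> J \<and> k \<in> J then f i k else 0)" for i k
    have "even ((\<Sum>i\<in>J. \<Sum>k\<in>J. g i k) - (\<Sum>i\<in>J. g i i))"
      by (rule sym_sum_parity) (auto simp: J_def g_def fsym)
    then show ?thesis by (simp add: g_def)
  qed
  moreover have "(\<Sum>i\<in>J. f i i) = int (card J)"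
  proof -
    have "\<And>i. i \<in> J \<Longrightarrow> f i i = 1" using z zV Mi by (auto simp: f_def J_def f2add_cancel)
    then show ?thesis by simp
  qed
  ultimately have "even (card J)" by simp
  then show False using J_odd unfolding J_def by simp
qed

lemma abar_abar:
  assumes "S \<subseteq> V"
  shows "abar (abar S) = {}"
proof -
  { fix u assume u: "u \<in> V"
    define g where "g w = (of_bool (w \<in> S) :: int)" for w
    define f where "f i k = g (f2add (f2add u (M ! i)) (M ! k))" for i k
    have inV: "\<And>i. i < n \<Longrightarrow> f2add u (M ! i) \<in> V" using u Mi by auto
    have bw: "even ((of_bool (w \<in> abar S) :: int) - (\<Sum>k<n. g w + g (f2add w (M ! k))))" if "w \<in> V" for w
      using that odd_of_bool_int[of "\<Sum>k<n. g w + g (f2add w (M ! k))"] by (simp add: abar_def g_def)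
    have s1: "even ((\<Sum>i<n. (of_bool (u \<in> abar S) + of_bool (f2add u (M ! i) \<in> abar S) :: int))
      - (\<Sum>i<n. (\<Sum>k<n. g u + g (f2add u (M ! k))) + (\<Sum>k<n. g (f2add u (M ! i)) + f i k)))"
      unfolding sum_subtractf[symmetric]
    proof (rule even_sum_int)
      fix i assume "i \<in> {..<n}"
      then have "even ((of_bool (u \<in> abar S) :: int) - (\<Sum>k<n. g u + g (f2add u (M ! k))))"
        "even ((of_bool (f2add u (M ! i) \<in> abar S) :: int) - (\<Sum>k<n. g (f2add u (M ! i)) + f i k))"
        using bw[OF u] bw[OF inV] by (auto simp: f_def)
      then show "even ((of_bool (u \<in> abar S) + of_bool (f2add u (M ! i) \<in> abar S) :: int) -
         ((\<Sum>k<n. g u + g (f2add u (M ! k))) + (\<Sum>k<n. g (f2add u (M ! i)) + f i k)))"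
        by (rule even_add2)
    qed simp
    define A where "A = (\<Sum>k<n. g (f2add u (M ! k)))"
    have s2: "(\<Sum>i<n. (\<Sum>k<n. g u + g (f2add u (M ! k))) + (\<Sum>k<n. g (f2add u (M ! i)) + f i k))
        = int n * int n * g u + 2 * int n * A + (\<Sum>i<n. \<Sum>k<n. f i k)"
      by (simp add: sum.distrib A_def sum_distrib_left algebra_simps)
    have s3: "even ((\<Sum>i<n. \<Sum>k<n. f i k) - (\<Sum>i<n. f i i))"
    proof -
      define h where "h i k = (if i < n \<and> k < n then f i k else 0)" for i k
      have "even ((\<Sum>i<n. \<Sum>k<n. h i k) - (\<Sum>i<n. h i i))"
      proof (rule sym_sum_parity)
        fix i k show "h i k = h k i"
        proof (cases "i < n \<and> k < n")
          case True
          then have "f2add (f2add u (M ! i)) (M ! k) = f2add (f2add u (M ! k)) (M ! i)"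
            using u Mi by (intro f2add_swap) auto
          then show ?thesis using True by (simp add: h_def f_def)
        qed (auto simp: h_def)
      qed simp
      then show ?thesis by (simp add: h_def)
    qed
    have s4: "(\<Sum>i<n. f i i) = int n * g u"
      using u Mi by (simp add: f_def f2add_cancel)
    have "even (int n * int n * g u + int n * g u)"
    proof -
      have "even (int n * int n + int n)" by simp
      then have "even ((int n * int n + int n) * g u)" by simp
      then show ?thesis by (simp add: algebra_simps)
    qed
    define X where "X = (\<Sum>i<n. (of_bool (u \<in> abar S) + of_bool (f2add u (M ! i) \<in> abar S) :: int))"
    define Z where "Z = (\<Sum>i<n. \<Sum>k<n. f i k)"
    have "X = (X - (int n * int n * g u + 2 * int n * A + Z)) + (Z - int n * g u)
       + (int n * int n * g u + int n * g u) + 2 * (int n * A)" by simp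
    moreover have "even (X - (int n * int n * g u + 2 * int n * A + Z))" using s1 s2 unfolding X_def Z_def by simp
    moreover have "even (Z - int n * g u)" using s3 s4 unfolding Z_def by simp
    ultimately have "even X" using \<open>even (int n * int n * g u + int n * g u)\<close>
      by (metis even_add even_mult_iff even_numeral)
    then have "even (\<Sum>i<n. (of_bool (u \<in> abar S) + of_bool (f2add u (M ! i) \<in> abar S) :: int))"
      unfolding X_def .
    then have "u \<notin> abar (abar S)" by (simp add: abar_def) }
  then show ?thesis using abar_sub by blast
qed

lemma card_H: "card H = 2 ^ (r - 1)" "card H' = 2 ^ (r - 1)"
proof -
  have bij: "bij_betw (\<lambda>u. f2add u (unitv r jj)) H H'"
    by (rule bij_betw_byWitness[where f'="\<lambda>u. f2add u (unitv r jj)"])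
       (use jj in \<open>auto simp: H_def H'_def f2add_cancel unitv_def\<close>)
  have "V = H \<union> H'" "H \<inter> H' = {}" by (auto simp: H_def H'_def)
  moreover have "finite H" "finite H'" by (auto intro: finite_subset[of _ V] simp: H_def H'_def)
  ultimately have "card H + card H' = 2 ^ r" using card_f2vecs[of r] card_Un_disjoint by metis
  moreover have "card H = card H'" using bij bij_betw_same_card by blast
  moreover have "(2::nat) ^ r = 2 * 2 ^ (r - 1)" using r1 by (cases r) auto
  ultimately show "card H = 2 ^ (r - 1)" "card H' = 2 ^ (r - 1)" by auto
qed

lemma card_abar_image: "card (abar ` Pow V) = 2 ^ (2 ^ (r - 1))"
proof (rule antisym)
  have finH: "finite H" "finite H'" by (auto intro: finite_subset[of _ V] simp: H_def H'_def)
  define Ann where "Ann = {S \<in> Pow V. abar S = {}}"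
  have "abar ` Pow V \<subseteq> Ann" using abar_abar abar_sub by (auto simp: Ann_def)
  moreover have "inj_on (\<lambda>S. S \<inter> H') Ann"
  proof (rule inj_onI)
    fix S S' assume a: "S \<in> Ann" "S' \<in> Ann" "S \<inter> H' = S' \<inter> H'"
    have "symd S S' \<subseteq> H"
    proof
      fix x assume x: "x \<in> symd S S'"
      then have xV: "x \<in> V" using a by (auto simp: Ann_def)
      have "\<not> x ! jj"
      proof
        assume "x ! jj"
        then have "x \<in> H'" using xV by (simp add: H'_def)
        then have "x \<in> S \<longleftrightarrow> x \<in> S'" using a(3) by blast
        then show False using x by simp
      qed
      then show "x \<in> H" using xV by (simp add: H_def)
    qed
    moreover have "abar (symd S S') = {}" using a abar_add[of S S'] by (simp add: Ann_def)
    ultimately have "symd S S' = {}" by (rule abar_kernel)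
    then show "S = S'" by (auto simp: set_eq_iff)
  qed
  moreover have "(\<lambda>S. S \<inter> H') ` Ann \<subseteq> Pow H'" by auto
  ultimately have "card Ann \<le> card (Pow H')"
    using finH by (metis card_inj_on_le finite_Pow_iff)
  moreover have "finite Ann" by (simp add: Ann_def)
  ultimately show "card (abar ` Pow V) \<le> 2 ^ (2 ^ (r - 1))"
    using \<open>abar ` Pow V \<subseteq> Ann\<close> card_H finH card_mono card_Pow
    by (metis order_trans)
next
  have finH: "finite H" by (auto intro: finite_subset[of _ V] simp: H_def)
  have "inj_on abar (Pow H)"
  proof (rule inj_onI)
    fix S S' assume a: "S \<in> Pow H" "S' \<in> Pow H" "abar S = abar S'"
    have "symd S S' \<subseteq> H" using a by auto
    moreover have "abar (symd S S') = {}" using a abar_add[of S S'] by simp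
    ultimately have "symd S S' = {}" by (rule abar_kernel)
    then show "S = S'" by (auto simp: set_eq_iff)
  qed
  then have "card (abar ` Pow H) = 2 ^ (2 ^ (r - 1))"
    using card_image card_Pow card_H finH by metis
  moreover have "abar ` Pow H \<subseteq> abar ` Pow V"
    by (rule image_mono) (auto simp: H_def)
  ultimately show "2 ^ (2 ^ (r - 1)) \<le> card (abar ` Pow V)"
    by (metis card_mono finite_Pow_iff finite_f2vecs finite_imageI)
qed

end



lemma free_ab_comm: "comm_group (free_ab V)"
proof (rule comm_groupI)
  fix x assume "x \<in> carrier (free_ab V)"
  then show "\<exists>y\<in>carrier (free_ab V). y \<otimes>\<^bsub>free_ab V\<^esub> x = \<one>\<^bsub>free_ab V\<^esub>"
    by (intro bexI[of _ "\<lambda>z. - x z"]) (auto simp: free_ab_def)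
qed (auto simp: free_ab_def)

lemma free_ab_inv: "x \<in> carrier (free_ab V) \<Longrightarrow> inv\<^bsub>free_ab V\<^esub> x = (\<lambda>z. - x z)"
  by (rule group.inv_equality[OF comm_group.axioms(2)[OF free_ab_comm]]) (auto simp: free_ab_def)

lemma free_ab_pow: "x [^]\<^bsub>free_ab V\<^esub> (k::nat) = (\<lambda>z. int k * x z)"
proof (induction k)
  case 0
  then show ?case using monoid.nat_pow_0[OF comm_monoid.axioms(1)[OF comm_group.axioms(1)[OF free_ab_comm]]]
    by (simp add: free_ab_def)
next
  case (Suc k)
  then show ?case using monoid.nat_pow_Suc[OF comm_monoid.axioms(1)[OF comm_group.axioms(1)[OF free_ab_comm]]]
    by (simp add: free_ab_def algebra_simps)
qed

lemma free_ab_mult[simp]: "x \<otimes>\<^bsub>free_ab V\<^esub> y = (\<lambda>z. x z + y z)"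
  by (simp add: free_ab_def)

lemma free_ab_one[simp]: "\<one>\<^bsub>free_ab V\<^esub> = (\<lambda>z. 0)"
  by (simp add: free_ab_def)

context sp
begin

abbreviation "A \<equiv> free_ab V"
abbreviation "B \<equiv> Lop ` carrier A"
abbreviation "C \<equiv> A Mod B"
abbreviation "K \<equiv> torsion_part C"
definition "D = {x \<in> carrier A. (\<Sum>u\<in>V. x u) = 0}"

lemma A_comm: "comm_group A" by (rule free_ab_comm)
lemma A_group: "group A" using A_comm comm_group.axioms(2) by blast

lemma Lop_carrier: "Lop c \<in> carrier A"
  by (simp add: carrier_free_ab Lop_def)

lemma Lop_add: "Lop (\<lambda>z. c z + d z) = (\<lambda>z. Lop c z + Lop d z)"
  by (rule ext) (simp add: Lop_def sum.distrib[symmetric] algebra_simps)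

lemma Lop_neg: "Lop (\<lambda>z. - c z) = (\<lambda>z. - Lop c z)"
  by (auto simp: Lop_def sum_negf[symmetric] intro!: sum.cong)

lemma B_sub: "subgroup B A"
proof (rule group.subgroupI[OF A_group])
  show "B \<subseteq> carrier A" using Lop_carrier by auto
  have "(\<lambda>z::bool list. 0::int) \<in> carrier A" by (simp add: carrier_free_ab)
  then show "B \<noteq> {}" by blast
next
  fix a assume "a \<in> B"
  then obtain c where c: "c \<in> carrier A" "a = Lop c" by auto
  then have "inv\<^bsub>A\<^esub> a = Lop (\<lambda>z. - c z)" using free_ab_inv[of a V] Lop_carrier Lop_neg by simp
  moreover have "(\<lambda>z. - c z) \<in> carrier A" using c by (simp add: carrier_free_ab)
  ultimately show "inv\<^bsub>A\<^esub> a \<in> B" by simp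
next
  fix a b assume "a \<in> B" "b \<in> B"
  then obtain c d where cd: "c \<in> carrier A" "a = Lop c" "d \<in> carrier A" "b = Lop d" by auto
  then have "(\<lambda>z. c z + d z) \<in> carrier A" by (simp add: carrier_free_ab)
  moreover have "a \<otimes>\<^bsub>A\<^esub> b = Lop (\<lambda>z. c z + d z)" using cd by (simp add: Lop_add)
  ultimately show "a \<otimes>\<^bsub>A\<^esub> b \<in> B" by simp
qed

lemma B_normal: "B \<lhd> A"
  using comm_group.subgroup_imp_normal[OF A_comm B_sub] .

lemma C_group: "group C" using normal.factorgroup_is_group[OF B_normal] .
lemma C_comm: "comm_group C" using comm_group.abelian_FactGroup[OF A_comm B_sub] .

lemma B_deg: "b \<in> B \<Longrightarrow> (\<Sum>u\<in>V. b u) = 0"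
  using Lop_deg by auto

lemma carrier_K_def: "carrier K = {X \<in> carrier C. \<exists>k::nat. k > 0 \<and> X [^]\<^bsub>C\<^esub> k = B}"
  by (simp add: torsion_part_def)

lemma K_sub: "subgroup (carrier K) C"
  using comm_group.torsion_subgroup[OF C_comm] by (simp add: torsion_part_def)

lemma K_group: "group K"
  using subgroup.subgroup_is_group[OF K_sub C_group] by (simp add: torsion_part_def)

lemma K_mult: "X \<otimes>\<^bsub>K\<^esub> Y = X <#>\<^bsub>A\<^esub> Y"
  by (simp add: torsion_part_def)

lemma K_one: "\<one>\<^bsub>K\<^esub> = B"
  by (simp add: torsion_part_def)

lemma coset_pow: "x \<in> carrier A \<Longrightarrow> (B #>\<^bsub>A\<^esub> x) [^]\<^bsub>C\<^esub> (k::nat) = B #>\<^bsub>A\<^esub> (\<lambda>z. int k * x z)"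
proof -
  assume x: "x \<in> carrier A"
  have "(B #>\<^bsub>A\<^esub> x) [^]\<^bsub>C\<^esub> k = B #>\<^bsub>A\<^esub> (x [^]\<^bsub>A\<^esub> k)"
    by (rule normal.FactGroup_pow[OF B_normal x])
  also have "x [^]\<^bsub>A\<^esub> k = (\<lambda>z. int k * x z)" by (rule free_ab_pow)
  finally show ?thesis .
qed

lemma coset_eq_B: "x \<in> carrier A \<Longrightarrow> B #>\<^bsub>A\<^esub> x = B \<longleftrightarrow> x \<in> B"
  using group.coset_join1[OF A_group _ _ B_sub] group.coset_join2[OF A_group _ B_sub] by blast

lemma carrier_K: "carrier K = (\<lambda>x. B #>\<^bsub>A\<^esub> x) ` D"
proof (rule Set.set_eqI)
  fix X
  show "X \<in> carrier K \<longleftrightarrow> X \<in> (\<lambda>x. B #>\<^bsub>A\<^esub> x) ` D"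
  proof
    assume "X \<in> carrier K"
    then obtain k :: nat where X: "X \<in> carrier C" "k > 0" "X [^]\<^bsub>C\<^esub> k = B"
      unfolding carrier_K_def by auto
    then obtain x where x: "x \<in> carrier A" "X = B #>\<^bsub>A\<^esub> x"
      by (auto simp: carrier_FactGroup)
    have kx: "(\<lambda>z. int k * x z) \<in> carrier A" using x by (simp add: carrier_free_ab)
    have "B #>\<^bsub>A\<^esub> (\<lambda>z. int k * x z) = B" using X x coset_pow by simp
    then have "(\<lambda>z. int k * x z) \<in> B" using coset_eq_B kx by blast
    then have "(\<Sum>u\<in>V. int k * x u) = 0" by (rule B_deg)
    then have "(\<Sum>u\<in>V. x u) = 0" using X by (simp add: sum_distrib_left[symmetric])
    then show "X \<in> (\<lambda>x. B #>\<^bsub>A\<^esub> x) ` D" using x by (auto simp: D_def)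
  next
    assume "X \<in> (\<lambda>x. B #>\<^bsub>A\<^esub> x) ` D"
    then obtain x where x: "x \<in> D" "X = B #>\<^bsub>A\<^esub> x" by auto
    then have xA: "x \<in> carrier A" by (simp add: D_def)
    define k :: nat where "k = 2 ^ r * fact (2 * n)"
    have "k > 0" by (simp add: k_def)
    have "(\<lambda>z. int k * x z) \<in> B" using torsion[OF xA] x by (simp add: D_def k_def)
    moreover have "(\<lambda>z. int k * x z) \<in> carrier A" using xA by (simp add: carrier_free_ab)
    ultimately have "X [^]\<^bsub>C\<^esub> k = B" using coset_pow[OF xA] coset_eq_B x by simp
    moreover have "X \<in> carrier C" using x xA by (auto simp: carrier_FactGroup)
    ultimately show "X \<in> carrier K" using \<open>k > 0\<close> unfolding carrier_K_def by auto
  qed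
qed

end



lemma card_symd_parity:
  assumes "finite S" "finite S'"
  shows "even (card (symd S S')) \<longleftrightarrow> (even (card S) \<longleftrightarrow> even (card S'))"
proof -
  have e: "symd S S' = (S \<union> S') - (S \<inter> S')" by auto
  have "card (symd S S') + card (S \<inter> S') = card (S \<union> S')"
    unfolding e using assms by (simp add: card_Diff_subset card_mono le_supI1)
  moreover have "card (S \<union> S') + card (S \<inter> S') = card S + card S'"
    using card_Un_Int[OF assms] by simp
  ultimately have "card (symd S S') + 2 * card (S \<inter> S') = card S + card S'" by simp
  then have "even (card (symd S S') + 2 * card (S \<inter> S')) \<longleftrightarrow> even (card S + card S')" by simp
  then show ?thesis by simp
qed

definition Dbar :: "bool list set \<Rightarrow> bool list set monoid" where
  "Dbar V = \<lparr>carrier = {S. S \<subseteq> V \<and> even (card S)}, mult = symd, one = {}\<rparr>"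

lemma Dbar_simps[simp]: "carrier (Dbar V) = {S. S \<subseteq> V \<and> even (card S)}"
  "mult (Dbar V) = symd" "one (Dbar V) = {}"
  by (simp_all add: Dbar_def)

lemma Dbar_comm: "finite V \<Longrightarrow> comm_group (Dbar V)"
proof (rule comm_groupI)
  fix x y assume "finite V" "x \<in> carrier (Dbar V)" "y \<in> carrier (Dbar V)"
  then have "finite x" "finite y" "x \<subseteq> V" "y \<subseteq> V" "even (card x)" "even (card y)"
    by (auto intro: finite_subset)
  moreover then have "symd x y \<subseteq> V" by (auto simp: symd_def)
  ultimately show "x \<otimes>\<^bsub>Dbar V\<^esub> y \<in> carrier (Dbar V)"
    using card_symd_parity[of x y] by simp
next
  fix x assume "finite V" "x \<in> carrier (Dbar V)"
  then show "\<exists>y\<in>carrier (Dbar V). y \<otimes>\<^bsub>Dbar V\<^esub> x = \<one>\<^bsub>Dbar V\<^esub>"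
    by (intro bexI[of _ x]) (auto simp: symd_def)
qed (auto simp: symd_def)

lemma Dbar_group: "finite V \<Longrightarrow> group (Dbar V)"
  using Dbar_comm comm_group.axioms(2) by blast

lemma Dbar_inv: "finite V \<Longrightarrow> x \<in> carrier (Dbar V) \<Longrightarrow> inv\<^bsub>Dbar V\<^esub> x = x"
  by (rule group.inv_equality[OF Dbar_group]) (auto simp: symd_def)

lemma card_Dbar:
  assumes "finite V" "z0 \<in> V"
  shows "card (carrier (Dbar V)) = 2 ^ (card V - 1)"
proof -
  define Ev where "Ev = {S. S \<subseteq> V \<and> even (card S)}"
  define Od where "Od = {S. S \<subseteq> V \<and> odd (card S)}"
  have "Pow V = Ev \<union> Od" "Ev \<inter> Od = {}" by (auto simp: Ev_def Od_def)
  moreover have "finite Ev" "finite Od" using assms by (auto simp: Ev_def Od_def)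
  ultimately have "card (Pow V) = card Ev + card Od"
    by (simp add: card_Un_disjoint)
  then have s: "card Ev + card Od = 2 ^ card V" using card_Pow[of V] assms by simp
  have par: "S \<subseteq> V \<Longrightarrow> even (card (symd S {z0})) \<longleftrightarrow> odd (card S)" for S
    using card_symd_parity[of S "{z0}"] assms finite_subset by auto
  have "bij_betw (\<lambda>S. symd S {z0}) Ev Od"
    by (rule bij_betw_byWitness[where f'="\<lambda>S. symd S {z0}"])
       (use assms par in \<open>auto simp: Ev_def Od_def symd_def\<close>)
  then have "card Ev = card Od" by (rule bij_betw_same_card)
  moreover have "card V \<ge> 1" using assms by (metis One_nat_def Suc_leI card_gt_0_iff empty_iff)
  moreover have "(2::nat) ^ card V = 2 * 2 ^ (card V - 1)"
    using \<open>card V \<ge> 1\<close> by (cases "card V") auto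
  ultimately have "card Ev = 2 ^ (card V - 1)" using s by linarith
  then show ?thesis by (simp add: Ev_def)
qed

definition par :: "('a \<Rightarrow> int) \<Rightarrow> 'a set" where
  "par x = {z. odd (x z)}"

lemma par_add: "par (\<lambda>z. x z + y z) = symd (par x) (par y)"
  by (auto simp: par_def)

lemma odd_sum_card: "finite V \<Longrightarrow> odd (\<Sum>u\<in>V. (x u :: int)) \<longleftrightarrow> odd (card {u \<in> V. odd (x u)})"
proof -
  assume f: "finite V"
  have "even ((\<Sum>u\<in>V. (of_bool (odd (x u)) :: int)) - (\<Sum>u\<in>V. x u))"
    unfolding sum_subtractf[symmetric] by (rule even_sum_int) (use f odd_of_bool_int in auto)
  moreover have "(\<Sum>u\<in>V. (of_bool (odd (x u)) :: int)) = int (card {u \<in> V. odd (x u)})"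
    using f by (subst sum_of_bool_eq) (auto intro!: arg_cong[where f=card])
  ultimately have "even (int (card {u \<in> V. odd (x u)}) - (\<Sum>u\<in>V. x u))" by simp
  then show ?thesis by simp
qed

lemma free_ab_rcos: "S #>\<^bsub>free_ab V\<^esub> x = (\<lambda>b z. b z + x z) ` S"
  by (auto simp: r_coset_def)

lemma Dbar_rcos: "S #>\<^bsub>Dbar V\<^esub> p = (\<lambda>t. symd t p) ` S"
  by (auto simp: r_coset_def)

lemma par_image_shift: "par ` ((\<lambda>b z. b z + x z) ` S) = (\<lambda>t. symd t (par x)) ` (par ` S)"
  by (simp add: image_image par_add)

lemma rcos_in_Mod: "a \<in> carrier G \<Longrightarrow> H #>\<^bsub>G\<^esub> a \<in> carrier (G Mod H)"
  by (auto simp: FactGroup_def RCOSETS_def)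

context sp
begin

abbreviation "DB \<equiv> Dbar V"
abbreviation "T \<equiv> par ` B"
abbreviation "Q \<equiv> DB Mod T"

definition phi :: "(bool list \<Rightarrow> int) set \<Rightarrow> bool list set set" where
  "phi X = par ` X"

lemma DB_group: "group DB" by (simp add: Dbar_group)
lemma DB_comm: "comm_group DB" by (simp add: Dbar_comm)

lemma par_sub: "x \<in> carrier A \<Longrightarrow> par x \<subseteq> V"
  by (auto simp: par_def carrier_free_ab)

lemma par_D: "x \<in> D \<Longrightarrow> par x \<in> carrier DB"
proof -
  assume x: "x \<in> D"
  then have "par x \<subseteq> V" using par_sub by (simp add: D_def)
  moreover have "par x = {u \<in> V. odd (x u)}" using calculation by (auto simp: par_def)
  moreover have "even (\<Sum>u\<in>V. x u)" using x by (simp add: D_def)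
  ultimately show ?thesis using odd_sum_card[of V x] by simp
qed

lemma B_D: "B \<subseteq> D"
  using Lop_carrier B_deg by (auto simp: D_def)

lemma T_sub: "subgroup T DB"
proof (rule group.subgroupI[OF DB_group])
  show "T \<subseteq> carrier DB" using B_D par_D by auto
  show "T \<noteq> {}" using subgroup.one_closed[OF B_sub] by blast
next
  fix a assume "a \<in> T"
  moreover then have "a \<in> carrier DB" using B_D par_D by auto
  ultimately show "inv\<^bsub>DB\<^esub> a \<in> T" using Dbar_inv by simp
next
  fix a b assume "a \<in> T" "b \<in> T"
  then obtain x y where xy: "x \<in> B" "y \<in> B" "a = par x" "b = par y" by auto
  then have "(\<lambda>z. x z + y z) \<in> B" using subgroup.m_closed[OF B_sub, of x y] by simp
  moreover have "a \<otimes>\<^bsub>DB\<^esub> b = par (\<lambda>z. x z + y z)" using xy by (simp add: par_add)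
  ultimately show "a \<otimes>\<^bsub>DB\<^esub> b \<in> T" by simp
qed

lemma T_normal: "T \<lhd> DB" using comm_group.subgroup_imp_normal[OF DB_comm T_sub] .
lemma Q_group: "group Q" using normal.factorgroup_is_group[OF T_normal] .

lemma par_Lop: "c \<in> carrier A \<Longrightarrow> par (Lop c) = abar (par c)"
proof (rule Set.set_eqI)
  fix u assume c: "c \<in> carrier A"
  show "u \<in> par (Lop c) \<longleftrightarrow> u \<in> abar (par c)"
  proof (cases "u \<in> V")
    case False
    have "u \<notin> abar (par c)" using abar_sub False by blast
    moreover have "u \<notin> par (Lop c)" using False by (simp add: par_def Lop_def)
    ultimately show ?thesis by blast
  next
    case True
    have "even ((\<Sum>i<n. c u - c (f2add u (M ! i)))
        - (\<Sum>i<n. (of_bool (u \<in> par c) + of_bool (f2add u (M ! i) \<in> par c) :: int)))"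
      unfolding sum_subtractf[symmetric]
      by (rule even_sum_int) (auto simp: par_def)
    then show ?thesis using True by (simp add: par_def Lop_def abar_def)
  qed
qed

lemma par_carrier: "par ` carrier A = Pow V"
proof
  show "par ` carrier A \<subseteq> Pow V" using par_sub by auto
  show "Pow V \<subseteq> par ` carrier A"
  proof
    fix S assume "S \<in> Pow V"
    then have "par (\<lambda>z. of_bool (z \<in> S)) = S" "(\<lambda>z. of_bool (z \<in> S) :: int) \<in> carrier A"
      by (auto simp: par_def carrier_free_ab)
    then show "S \<in> par ` carrier A" by (metis image_eqI)
  qed
qed

lemma T_eq: "T = abar ` Pow V"
proof -
  have "T = (\<lambda>c. par (Lop c)) ` carrier A" by (simp add: image_image)
  also have "\<dots> = (\<lambda>c. abar (par c)) ` carrier A" using par_Lop by (simp cong: image_cong)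
  also have "\<dots> = abar ` Pow V" using par_carrier by (metis image_image)
  finally show ?thesis .
qed

lemma card_T: "card T = 2 ^ (2 ^ (r - 1))"
  using T_eq card_abar_image by simp

lemma card_Q: "card (carrier Q) = 2 ^ (2 ^ (r - 1) - 1)" "finite (carrier Q)"
proof -
  have "card (rcosets\<^bsub>DB\<^esub> T) * card T = order DB"
    using group.lagrange[OF DB_group T_sub] .
  moreover have "order DB = 2 ^ (2 ^ r - 1)"
    unfolding order_def using card_Dbar[of V "f2zero r"] card_f2vecs[of r] by simp
  moreover have "carrier Q = rcosets\<^bsub>DB\<^esub> T" by (simp add: FactGroup_def)
  moreover have "(2::nat) ^ (2 ^ r - 1) = 2 ^ (2 ^ (r - 1) - 1) * 2 ^ (2 ^ (r - 1))"
  proof -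
    define a where "a = (2::nat) ^ (r - 1)"
    have "(2::nat) ^ r = a + a" using r1 unfolding a_def by (cases r) auto
    moreover have "a \<ge> 1" by (simp add: a_def)
    ultimately have e: "(2::nat) ^ r - 1 = (a - 1) + a" by linarith
    have "(2::nat) ^ (2 ^ r - 1) = 2 ^ (a - 1) * 2 ^ a" unfolding e by (rule power_add)
    then show ?thesis by (simp add: a_def)
  qed
  ultimately show "card (carrier Q) = 2 ^ (2 ^ (r - 1) - 1)" using card_T by simp
  show "finite (carrier Q)"
  proof -
    have u: "\<Union> (rcosets\<^bsub>DB\<^esub> T) = carrier DB" by (rule group.rcosets_part_G[OF DB_group T_sub])
    have "carrier Q = rcosets\<^bsub>DB\<^esub> T" by (simp add: FactGroup_def)
    also have "\<dots> \<subseteq> Pow (\<Union> (rcosets\<^bsub>DB\<^esub> T))" by blast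
    finally have "carrier Q \<subseteq> Pow (carrier DB)" by (simp only: u)
    moreover have "finite (carrier DB)" by (rule finite_subset[of _ "Pow V"]) auto
    ultimately show ?thesis by (meson finite_Pow_iff finite_subset)
  qed
qed

lemma phi_coset: "x \<in> carrier A \<Longrightarrow> phi (B #>\<^bsub>A\<^esub> x) = T #>\<^bsub>DB\<^esub> par x"
  unfolding phi_def free_ab_rcos Dbar_rcos par_image_shift ..

lemma D_add: "x \<in> D \<Longrightarrow> y \<in> D \<Longrightarrow> (\<lambda>z. x z + y z) \<in> D"
  by (auto simp: D_def carrier_free_ab sum.distrib)

lemma phi_hom: "phi \<in> hom K Q"
proof (rule homI)
  fix X assume "X \<in> carrier K"
  then obtain x where x: "x \<in> D" "X = B #>\<^bsub>A\<^esub> x" using carrier_K by auto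
  then have "phi X = T #>\<^bsub>DB\<^esub> par x" using phi_coset by (simp add: D_def)
  then show "phi X \<in> carrier Q" using rcos_in_Mod[OF par_D[OF x(1)]] by simp
next
  fix X Y assume "X \<in> carrier K" "Y \<in> carrier K"
  then obtain x y where x: "x \<in> D" "X = B #>\<^bsub>A\<^esub> x" "y \<in> D" "Y = B #>\<^bsub>A\<^esub> y"
    using carrier_K by auto
  have xA: "x \<in> carrier A" "y \<in> carrier A" using x by (auto simp: D_def)
  have "X \<otimes>\<^bsub>K\<^esub> Y = B #>\<^bsub>A\<^esub> (\<lambda>z. x z + y z)"
    using K_mult normal.rcos_sum[OF B_normal xA] x by simp
  then have "phi (X \<otimes>\<^bsub>K\<^esub> Y) = T #>\<^bsub>DB\<^esub> symd (par x) (par y)"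
  proof -
    assume h: "X \<otimes>\<^bsub>K\<^esub> Y = B #>\<^bsub>A\<^esub> (\<lambda>z. x z + y z)"
    have "(\<lambda>z. x z + y z) \<in> carrier A" using D_add[OF x(1) x(3)] by (simp add: D_def)
    then have "phi (X \<otimes>\<^bsub>K\<^esub> Y) = T #>\<^bsub>DB\<^esub> par (\<lambda>z. x z + y z)" using h phi_coset by simp
    also have "par (\<lambda>z. x z + y z) = symd (par x) (par y)" by (rule par_add)
    finally show ?thesis .
  qed
  also have "\<dots> = (T #>\<^bsub>DB\<^esub> par x) <#>\<^bsub>DB\<^esub> (T #>\<^bsub>DB\<^esub> par y)"
    using normal.rcos_sum[OF T_normal par_D[OF x(1)] par_D[OF x(3)]] by simp
  also have "\<dots> = phi X \<otimes>\<^bsub>Q\<^esub> phi Y" using x xA phi_coset by (simp add: FactGroup_def)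
  finally show "phi (X \<otimes>\<^bsub>K\<^esub> Y) = phi X \<otimes>\<^bsub>Q\<^esub> phi Y" .
qed

lemma phi_group_hom: "group_hom K Q phi"
  by (rule group_hom.intro[OF K_group Q_group]) (simp add: group_hom_axioms_def phi_hom)

lemma phi_onto: "phi ` carrier K = carrier Q"
proof
  show "phi ` carrier K \<subseteq> carrier Q" using phi_hom by (auto simp: hom_def)
  show "carrier Q \<subseteq> phi ` carrier K"
  proof
    fix Z assume "Z \<in> carrier Q"
    then obtain f where f: "f \<in> carrier DB" "Z = T #>\<^bsub>DB\<^esub> f"
      by (auto simp: FactGroup_def RCOSETS_def)
    define z0 where "z0 = f2zero r"
    have z0: "z0 \<in> V" by (simp add: z0_def)
    define x where "x z = (if z \<in> V then of_bool (z \<in> f) - (if z = z0 then int (card f) else 0) else 0)" for z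
    have fV: "f \<subseteq> V" "even (card f)" using f by auto
    have xA: "x \<in> carrier A" by (simp add: x_def carrier_free_ab)
    have "(\<Sum>u\<in>V. x u) = (\<Sum>u\<in>V. (of_bool (u \<in> f) :: int)) - (\<Sum>u\<in>V. if u = z0 then int (card f) else 0)"
      by (simp add: x_def sum_subtractf)
    also have "\<dots> = 0"
    proof -
      have "V \<inter> {u. u \<in> f} = f" using fV by auto
      then have "(\<Sum>u\<in>V. (of_bool (u \<in> f) :: int)) = int (card f)"
        by (subst sum_of_bool_eq) simp_all
      moreover have "(\<Sum>u\<in>V. if u = z0 then int (card f) else 0) = int (card f)"
        using z0 by (simp add: sum.delta)
      ultimately show ?thesis by simp
    qed
    finally have xD: "x \<in> D" using xA by (simp add: D_def)
    have "par x = f"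
      using fV z0 by (auto simp: par_def x_def split: if_splits)
    then have "phi (B #>\<^bsub>A\<^esub> x) = Z" using phi_coset xA f by simp
    moreover have "B #>\<^bsub>A\<^esub> x \<in> carrier K" using carrier_K xD by auto
    ultimately show "Z \<in> phi ` carrier K" by blast
  qed
qed

lemma Q_sq: "Z \<in> carrier Q \<Longrightarrow> Z \<otimes>\<^bsub>Q\<^esub> Z = \<one>\<^bsub>Q\<^esub>"
proof -
  assume "Z \<in> carrier Q"
  then obtain f where f: "f \<in> carrier DB" "Z = T #>\<^bsub>DB\<^esub> f"
    by (auto simp: FactGroup_def RCOSETS_def)
  then have "Z \<otimes>\<^bsub>Q\<^esub> Z = T #>\<^bsub>DB\<^esub> symd f f"
    using normal.rcos_sum[OF T_normal f(1) f(1)] by (simp add: FactGroup_def)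
  also have "symd f f = {}" by (auto simp: symd_def)
  also have "T #>\<^bsub>DB\<^esub> {} = T"
    using group.coset_mult_one[OF DB_group] subgroup.subset[OF T_sub] by (metis Dbar_simps(3))
  finally show ?thesis by (simp add: FactGroup_def)
qed

lemma kernel_phi: "kernel K Q phi = {a \<otimes>\<^bsub>K\<^esub> a | a. a \<in> carrier K}"
proof (rule Set.set_eqI)
  fix X
  show "X \<in> kernel K Q phi \<longleftrightarrow> X \<in> {a \<otimes>\<^bsub>K\<^esub> a | a. a \<in> carrier K}"
  proof
    assume "X \<in> {a \<otimes>\<^bsub>K\<^esub> a | a. a \<in> carrier K}"
    then obtain a where a: "a \<in> carrier K" "X = a \<otimes>\<^bsub>K\<^esub> a" by auto
    have "phi X = phi a \<otimes>\<^bsub>Q\<^esub> phi a" using a phi_hom by (simp add: hom_def)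
    also have "\<dots> = \<one>\<^bsub>Q\<^esub>" using Q_sq phi_hom a by (auto simp: hom_def)
    finally show "X \<in> kernel K Q phi"
      using a group.subgroup_self[OF K_group] by (auto simp: kernel_def group.is_monoid[OF K_group] monoid.m_closed)
  next
    assume X: "X \<in> kernel K Q phi"
    then have XK: "X \<in> carrier K" "phi X = T" by (auto simp: kernel_def FactGroup_def)
    then obtain x where x: "x \<in> D" "X = B #>\<^bsub>A\<^esub> x" using carrier_K by auto
    have xA: "x \<in> carrier A" using x by (simp add: D_def)
    have "T #>\<^bsub>DB\<^esub> par x = T" using XK x phi_coset xA by simp
    then have "par x \<in> T" using group.coset_join1[OF DB_group _ par_D[OF x(1)] T_sub] by simp
    then obtain b where b: "b \<in> B" "par x = par b" by auto
    have bA: "b \<in> carrier A" using b Lop_carrier by auto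
    have ev: "even (x z - b z)" for z
    proof -
      have "odd (x z) \<longleftrightarrow> odd (b z)" using b(2) unfolding par_def by blast
      then show ?thesis by simp
    qed
    define y where "y z = (x z - b z) div 2" for z
    have y2: "y z + y z = x z - b z" for z using ev[of z] unfolding y_def by presburger
    have yA: "y \<in> carrier A" using xA bA by (simp add: carrier_free_ab y_def)
    have "(\<Sum>u\<in>V. y u) + (\<Sum>u\<in>V. y u) = (\<Sum>u\<in>V. x u) - (\<Sum>u\<in>V. b u)"
      by (simp add: y2 sum.distrib[symmetric] sum_subtractf[symmetric])
    then have "(\<Sum>u\<in>V. y u) = 0" using x B_deg[OF b(1)] by (simp add: D_def)
    then have yD: "y \<in> D" using yA by (simp add: D_def)
    define Y where "Y = B #>\<^bsub>A\<^esub> y"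
    have YK: "Y \<in> carrier K" using carrier_K yD Y_def by auto
    have "Y \<otimes>\<^bsub>K\<^esub> Y = B #>\<^bsub>A\<^esub> (\<lambda>z. y z + y z)"
      using K_mult normal.rcos_sum[OF B_normal yA yA] Y_def by simp
    also have "(\<lambda>z. y z + y z) = (\<lambda>z. - b z) \<otimes>\<^bsub>A\<^esub> x" by (auto simp: y2)
    also have "B #>\<^bsub>A\<^esub> ((\<lambda>z. - b z) \<otimes>\<^bsub>A\<^esub> x) = (B #>\<^bsub>A\<^esub> (\<lambda>z. - b z)) #>\<^bsub>A\<^esub> x"
      using group.coset_mult_assoc[OF A_group subgroup.subset[OF B_sub], of "\<lambda>z. - b z" x] bA xA
      by (simp add: carrier_free_ab)
    also have "B #>\<^bsub>A\<^esub> (\<lambda>z. - b z) = B"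
    proof -
      have "inv\<^bsub>A\<^esub> b \<in> B" using subgroup.m_inv_closed[OF B_sub b(1)] .
      then have "(\<lambda>z. - b z) \<in> B" using free_ab_inv[OF bA] by simp
      then show ?thesis using subgroup.rcos_const[OF B_sub A_group] by blast
    qed
    finally have "X = Y \<otimes>\<^bsub>K\<^esub> Y" using x by simp
    then show "X \<in> {a \<otimes>\<^bsub>K\<^esub> a | a. a \<in> carrier K}" using YK by blast
  qed
qed

lemma main:
  "finite (carrier (mod_two K)) \<and> card (carrier (mod_two K)) = 2 ^ (2 ^ (r - 1) - 1)"
proof -
  have "mod_two K = K Mod (kernel K Q phi)" by (simp add: mod_two_def kernel_phi)
  moreover have "bij_betw (\<lambda>X. the_elem (phi ` X)) (carrier (K Mod (kernel K Q phi))) (carrier Q)"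
    using group_hom.FactGroup_iso_set[OF phi_group_hom phi_onto] by (simp add: iso_def)
  ultimately have "bij_betw (\<lambda>X. the_elem (phi ` X)) (carrier (mod_two K)) (carrier Q)" by simp
  then show ?thesis using card_Q bij_betw_same_card bij_betw_finite by metis
qed

end


theorem mainTheorem1:
  fixes r :: nat and M :: "bool list list"
  assumes "r \<ge> 1"
    and "\<forall>v \<in> set M. v \<in> f2vecs r \<and> v \<noteq> f2zero r"
    and "f2generates r M"
    and "f2sum r M \<noteq> f2zero r"
  shows "finite (carrier (mod_two (sandpile_group r M)))
         \<and> card (carrier (mod_two (sandpile_group r M))) = 2 ^ (2 ^ (r - 1) - 1)"
proof -
  interpret sp r M using assms by unfold_locales
  have "sandpile_group r M = K"
    by (simp add: sandpile_group_def coker_def mat_image_eq)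
  then show ?thesis using main by simp
qed

end
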